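(* Let $d\ge1$, $Q_d=[0,1]^d$, $a>0$, and for $n\ge1$ define $C_n$ on $\mathscr{L}^1(Q_d)$ by $$C_n(f)(x)=\sum_{h\in\{0,\dots,n\}^d}P_{n,h}(x)\int_{Q_d}f\Big(\frac{h+au}{n+a}\Big)\,du\qquad(x\in Q_d).$$ If $f\in\mathscr{L}^p(Q_d)$ with $1\le p<+\infty$, then $C_n(f)\to f$ in $\mathscr{L}^p(Q_d)$ as $n\to\infty$.
   Context: For $h=(h_1,\dots,h_d)\in\{0,\dots,n\}^d$ and $x\in Q_d$, $P_{n,h}(x)=\prod_{i=1}^d\binom{n}{h_i}x_i^{h_i}(1-x_i)^{n-h_i}$. $\mathscr{L}^p(Q_d)$ is taken with respect to Lebesgue measure; $du$ denotes Lebesgue measure on $Q_d$. *)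

theory Defs
  imports "HOL-Analysis.Analysis"
begin

definition cube :: "(real ^ 'd) set" where
  "cube = cbox 0 One"

definition multi_idx :: "nat \<Rightarrow> ('d::finite \<Rightarrow> nat) set" where
  "multi_idx n = {h. \<forall>i. h i \<le> n}"

definition bern :: "nat \<Rightarrow> ('d::finite \<Rightarrow> nat) \<Rightarrow> real ^ 'd \<Rightarrow> real" where
  "bern n h x = (\<Prod>i\<in>UNIV. real (n choose h i) * (x $ i) ^ (h i) * (1 - x $ i) ^ (n - h i))"

definition Cop :: "real \<Rightarrow> nat \<Rightarrow> (real ^ 'd::finite \<Rightarrow> real) \<Rightarrow> real ^ 'd \<Rightarrow> real" where
  "Cop a n f x = (\<Sum>h\<in>multi_idx n. bern n h x *
      (LINT u|lebesgue_on cube. f (\<chi> i. (real (h i) + a * u $ i) / (real n + a))))"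

end

theory Submission
  imports Defs "HOL-Probability.Probability"
begin


lemma multi_idx_PiE: "multi_idx n = PiE UNIV (\<lambda>_. {..n})"
  by (auto simp: multi_idx_def PiE_def extensional_def)

lemma finite_multi_idx: "finite (multi_idx n)"
  by (simp add: multi_idx_PiE finite_PiE)

lemma multi_idx_ne: "multi_idx n \<noteq> {}"
  by (auto simp: multi_idx_def intro!: exI[of _ "\<lambda>_. 0"])

lemma bern_eq: "bern n h x = (\<Prod>i\<in>UNIV. Bernstein n (h i) (x$i))"
  by (simp add: bern_def Bernstein_def)

lemma sum_multi_prod:
  fixes F :: "'d::finite \<Rightarrow> nat \<Rightarrow> 'c::comm_semiring_1"
  shows "(\<Sum>h\<in>multi_idx n. \<Prod>i\<in>UNIV. F i (h i)) = (\<Prod>i\<in>UNIV. \<Sum>k\<le>n. F i k)"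
  by (simp add: multi_idx_PiE prod_sum_PiE)

lemma sum_bern: "(\<Sum>h\<in>multi_idx n. bern n h x) = 1"
  using sum_multi_prod[of "\<lambda>i k. Bernstein n k (x$i)" n] by (simp add: bern_eq)

lemma prod_if_single:
  fixes A B :: "'d::finite \<Rightarrow> 'c::comm_monoid_mult"
  shows "(\<Prod>i\<in>UNIV. if i = j then A i else B i) = A j * (\<Prod>i\<in>UNIV-{j}. B i)"
  by (subst prod.remove[of UNIV j]) (auto intro!: prod.cong)

lemma sum_bern_coord:
  "(\<Sum>h\<in>multi_idx n. bern n h x * G (h j)) = (\<Sum>k\<le>n. Bernstein n k (x$j) * G k)"
proof -
  have "(\<Sum>h\<in>multi_idx n. bern n h x * G (h j)) =
     (\<Sum>h\<in>multi_idx n. \<Prod>i\<in>UNIV. (if i = j then Bernstein n (h i) (x$i) * G (h i) else Bernstein n (h i) (x$i)))"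
  proof (rule sum.cong)
    fix h
    have "bern n h x = Bernstein n (h j) (x$j) * (\<Prod>i\<in>UNIV-{j}. Bernstein n (h i) (x$i))"
      unfolding bern_eq by (subst prod.remove[of UNIV j]) auto
    then show "bern n h x * G (h j) = (\<Prod>i\<in>UNIV. (if i = j then Bernstein n (h i) (x$i) * G (h i) else Bernstein n (h i) (x$i)))"
      by (simp add: prod_if_single)
  qed simp
  also have "\<dots> = (\<Prod>i\<in>UNIV. \<Sum>k\<le>n. if i = j then Bernstein n k (x$i) * G k else Bernstein n k (x$i))"
    by (rule sum_multi_prod)
  also have "\<dots> = (\<Prod>i\<in>UNIV. if i = j then (\<Sum>k\<le>n. Bernstein n k (x$i) * G k) else 1)"
    by (intro prod.cong) auto
  also have "\<dots> = (\<Sum>k\<le>n. Bernstein n k (x$j) * G k)"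
    by (simp add: prod_if_single)
  finally show ?thesis .
qed

lemma Bernstein_var: "(\<Sum>k\<le>n. Bernstein n k t * (real k - real n * t)^2) = real n * t * (1 - t)"
proof -
  have "(\<Sum>k\<le>n. Bernstein n k t * (real k - real n * t)^2) =
     (\<Sum>k\<le>n. real k * (real k - 1) * Bernstein n k t + (1 - 2 * real n * t) * (real k * Bernstein n k t)
      + (real n * t)^2 * Bernstein n k t)"
    by (rule sum.cong) (simp_all add: power2_eq_square algebra_simps)
  also have "\<dots> = (\<Sum>k\<le>n. real k * (real k - 1) * Bernstein n k t) + (1 - 2 * real n * t) * (\<Sum>k\<le>n. real k * Bernstein n k t)
      + (real n * t)^2 * (\<Sum>k\<le>n. Bernstein n k t)"
    by (simp add: sum.distrib flip: sum_distrib_left)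
  also have "\<dots> = real n * t * (1 - t)"
    by (simp only: sum_kk_Bernstein sum_k_Bernstein sum_Bernstein) (simp add: power2_eq_square algebra_simps)
  finally show ?thesis .
qed

lemma sum_bern_var:
  "(\<Sum>h\<in>multi_idx n. bern n h x * (real (h j) - real n * x$j)^2) = real n * x$j * (1 - x$j)"
  using sum_bern_coord[of n x "\<lambda>k. (real k - real n * x$j)^2" j] by (simp add: Bernstein_var)

lemma One_nth' [simp]: "(\<Sum>x\<in>(Basis::(real^'d::finite) set). x $ i) = 1"
proof -
  have B: "(Basis :: (real^'d) set) = (\<lambda>j. axis j 1) ` UNIV"
    by (auto simp: Basis_vec_def)
  have inj: "inj (\<lambda>j::'d. axis j (1::real))"
    by (auto simp: inj_on_def axis_eq_axis)
  have "(\<Sum>x\<in>(Basis::(real^'d::finite) set). x $ i) = (\<Sum>j\<in>UNIV. (axis j (1::real)) $ i)"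
    unfolding B by (simp add: sum.reindex[OF inj])
  also have "\<dots> = 1" by (simp add: axis_def)
  finally show ?thesis .
qed

lemma One_nth [simp]: "(One :: real^'d::finite) $ i = 1"
  by simp

lemma bern_nonneg: "x \<in> cube \<Longrightarrow> 0 \<le> bern n h x"
  unfolding bern_eq cube_def
  by (intro prod_nonneg Bernstein_nonneg) (auto simp: mem_box_cart)

lemma cube_iff: "x \<in> cube \<longleftrightarrow> (\<forall>i. 0 \<le> x$i \<and> x$i \<le> 1)"
  by (simp add: cube_def mem_box_cart)


lemma cvx0: assumes "p \<ge> 1" shows "convex_on {0..} (\<lambda>s::real. s powr p)"
proof (rule convex_onI)
  fix t x y :: real assume t: "0 < t" "t < 1" and x: "x \<in> {0..}" and y: "y \<in> {0..}"
  have tp: "t powr p \<le> t" using t assms powr_mono'[of 1 p t] by simp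
  have tp': "(1-t) powr p \<le> 1-t" using t assms powr_mono'[of 1 p "1-t"] by simp
  show "((1 - t) *\<^sub>R x + t *\<^sub>R y) powr p \<le> (1 - t) * x powr p + t * y powr p"
  proof (cases "x = 0 \<or> y = 0")
    case True
    then show ?thesis
    proof
      assume "x = 0"
      then have "((1 - t) *\<^sub>R x + t *\<^sub>R y) powr p = t powr p * y powr p"
        using t y by (simp add: powr_mult)
      also have "\<dots> \<le> t * y powr p" using tp by (intro mult_right_mono) auto
      finally show ?thesis using \<open>x = 0\<close> by simp
    next
      assume "y = 0"
      then have "((1 - t) *\<^sub>R x + t *\<^sub>R y) powr p = (1-t) powr p * x powr p"
        using t x by (simp add: powr_mult)
      also have "\<dots> \<le> (1-t) * x powr p" using tp' by (intro mult_right_mono) auto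
      finally show ?thesis using \<open>y = 0\<close> by simp
    qed
  next
    case False
    with x y have "x \<in> {0<..}" "y \<in> {0<..}" by auto
    from convex_onD[OF powr_convex[OF assms] _ _ this] t
    show ?thesis by simp
  qed
qed simp

lemma cvx_abs: assumes "p \<ge> 1" shows "convex_on UNIV (\<lambda>s::real. \<bar>s\<bar> powr p)"
proof (rule convex_onI)
  fix t x y :: real assume t: "0 < t" "t < 1"
  have "\<bar>(1 - t) *\<^sub>R x + t *\<^sub>R y\<bar> powr p \<le> ((1 - t) *\<^sub>R \<bar>x\<bar> + t *\<^sub>R \<bar>y\<bar>) powr p"
    using t assms by (intro powr_mono2) (auto simp: abs_mult intro: order.trans[OF abs_triangle_ineq])
  also have "\<dots> \<le> (1 - t) * \<bar>x\<bar> powr p + t * \<bar>y\<bar> powr p"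
    using convex_onD[OF cvx0[OF assms], of t "\<bar>x\<bar>" "\<bar>y\<bar>"] t by simp
  finally show "\<bar>(1 - t) *\<^sub>R x + t *\<^sub>R y\<bar> powr p \<le> (1 - t) * \<bar>x\<bar> powr p + t * \<bar>y\<bar> powr p" .
qed simp

lemma powr_half:
  fixes x y p :: real assumes "p \<ge> 1"
  shows "\<bar>(x + y)/2\<bar> powr p \<le> (\<bar>x\<bar> powr p + \<bar>y\<bar> powr p) / 2"
  using convex_onD[OF cvx_abs[OF assms], of "1/2" x y] by (simp add: field_simps)

lemma powr_add2:
  fixes x y p :: real assumes p: "p \<ge> 1"
  shows "\<bar>x + y\<bar> powr p \<le> 2 powr (p-1) * (\<bar>x\<bar> powr p + \<bar>y\<bar> powr p)"
proof -
  have "\<bar>x + y\<bar> powr p = 2 powr p * \<bar>(x + y)/2\<bar> powr p"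
    by (simp add: powr_divide abs_divide)
  also have "\<dots> \<le> 2 powr p * ((\<bar>x\<bar> powr p + \<bar>y\<bar> powr p) / 2)"
    by (intro mult_left_mono powr_half p) auto
  also have "\<dots> = 2 powr (p-1) * (\<bar>x\<bar> powr p + \<bar>y\<bar> powr p)"
    by (simp add: powr_diff)
  finally show ?thesis .
qed

lemma powr_add3:
  fixes x y z p :: real assumes p: "p \<ge> 1"
  shows "\<bar>x + y + z\<bar> powr p \<le> 3 powr (p-1) * (\<bar>x\<bar> powr p + \<bar>y\<bar> powr p + \<bar>z\<bar> powr p)"
proof -
  have e: "(x + y + z)/3 = (1 - 2/3) *\<^sub>R x + (2/3) *\<^sub>R ((y+z)/2)" by simp
  have "\<bar>x + y + z\<bar> powr p = 3 powr p * \<bar>(x + y + z)/3\<bar> powr p"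
    by (simp add: powr_divide abs_divide)
  also have "\<bar>(x + y + z)/3\<bar> powr p \<le> (1 - 2/3) * \<bar>x\<bar> powr p + (2/3) * \<bar>(y+z)/2\<bar> powr p"
    unfolding e by (rule convex_onD[OF cvx_abs[OF p]]) auto
  also have "\<dots> \<le> (1 - 2/3) * \<bar>x\<bar> powr p + (2/3) * ((\<bar>y\<bar> powr p + \<bar>z\<bar> powr p) / 2)"
    by (intro add_left_mono mult_left_mono powr_half p) auto
  also have "(1 - 2/3) * \<bar>x\<bar> powr p + (2/3) * ((\<bar>y\<bar> powr p + \<bar>z\<bar> powr p) / 2) =
     (\<bar>x\<bar> powr p + \<bar>y\<bar> powr p + \<bar>z\<bar> powr p) / 3"
    by simp
  finally have "\<bar>x + y + z\<bar> powr p \<le> 3 powr p * ((\<bar>x\<bar> powr p + \<bar>y\<bar> powr p + \<bar>z\<bar> powr p) / 3)"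
    by simp
  also have "\<dots> = 3 powr (p-1) * (\<bar>x\<bar> powr p + \<bar>y\<bar> powr p + \<bar>z\<bar> powr p)"
    by (simp add: powr_diff)
  finally show ?thesis .
qed

lemma jensen_abs_powr:
  fixes X :: "'a \<Rightarrow> real" and p :: real
  assumes "prob_space N" "p \<ge> 1" "integrable N X" "integrable N (\<lambda>x. \<bar>X x\<bar> powr p)"
  shows "\<bar>integral\<^sup>L N X\<bar> powr p \<le> integral\<^sup>L N (\<lambda>x. \<bar>X x\<bar> powr p)"
proof -
  interpret prob_space N by fact
  show ?thesis
    by (rule jensens_inequality[where I=UNIV and q="\<lambda>s. \<bar>s\<bar> powr p"]) (use assms cvx_abs in auto)
qed

lemma cube_sets [simp]: "cube \<in> sets lebesgue"
  by (simp add: cube_def)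

lemma emeasure_cube: "emeasure lebesgue cube = 1"
  by (simp add: cube_def emeasure_lborel_cbox_eq inner_diff_left)

lemma prob_M: "prob_space (lebesgue_on cube)"
  by (rule prob_space_restrict_space) (auto simp: emeasure_cube)

lemma space_M [simp]: "space (lebesgue_on cube) = cube"
  by simp


definition Tm :: "real \<Rightarrow> nat \<Rightarrow> ('d::finite \<Rightarrow> nat) \<Rightarrow> real^'d \<Rightarrow> real^'d" where
  "Tm a n h u = (\<chi> i. (real (h i) + a * u $ i) / (real n + a))"

definition tv :: "real \<Rightarrow> nat \<Rightarrow> ('d::finite \<Rightarrow> nat) \<Rightarrow> real^'d" where
  "tv a n h = (\<chi> i. real (h i) / (real n + a))"

lemma Tm_affine: "Tm a n h u = tv a n h + (a / (real n + a)) *\<^sub>R u"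
  by (simp add: vec_eq_iff Tm_def tv_def add_divide_distrib)

lemma Cop_Tm: "Cop a n f x = (\<Sum>h\<in>multi_idx n. bern n h x * (LINT u|lebesgue_on cube. f (Tm a n h u)))"
  by (simp add: Cop_def Tm_def)

lemma Tm_in_cube:
  assumes a: "a > 0" and h: "h \<in> multi_idx n" and u: "u \<in> cube"
  shows "Tm a n h u \<in> cube"
  unfolding cube_iff
proof
  fix i
  have hi: "real (h i) \<le> real n" using h by (simp add: multi_idx_def)
  have ui: "0 \<le> u$i" "u$i \<le> 1" using u by (auto simp: cube_iff)
  have "a * u$i \<le> a" using ui a by (simp add: mult_left_le)
  then have le: "real (h i) + a * u$i \<le> real n + a" using hi by linarith
  show "0 \<le> Tm a n h u $ i \<and> Tm a n h u $ i \<le> 1"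
    using le ui a by (auto simp: Tm_def divide_le_eq_1)
qed

lemma cont_Tm: "continuous_on S (Tm a n h)"
  unfolding Tm_affine[abs_def] by (intro continuous_intros)

lemma norm_sq_vec: "(norm (v::real^'d::finite))\<^sup>2 = (\<Sum>i\<in>UNIV. (v$i)\<^sup>2)"
  unfolding power2_norm_eq_inner inner_vec_def by (simp add: power2_eq_square)

lemma integrable_cont_cube:
  assumes "continuous_on cube g"
  shows "integrable (lebesgue_on cube) (g :: real^'d::finite \<Rightarrow> real)"
  using continuous_imp_integrable[of 0 One g] assms by (simp add: cube_def)

lemma integrable_cont_Tm:
  fixes g :: "real^'d::finite \<Rightarrow> real"
  assumes a: "a > 0" and g: "continuous_on cube g" and h: "h \<in> multi_idx n"
  shows "integrable (lebesgue_on cube) (\<lambda>u. g (Tm a n h u))"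
proof (rule integrable_cont_cube[where g="\<lambda>u. g (Tm a n h u)"])
  show "continuous_on cube (\<lambda>u. g (Tm a n h u))"
    by (rule continuous_on_compose2[OF g cont_Tm]) (use Tm_in_cube[OF a h] in auto)
qed

lemma measure_M [simp]: "measure (lebesgue_on (cube::(real^'d::finite) set)) cube = 1"
  using prob_space.prob_space[OF prob_M] by simp

lemma integral_const_M [simp]: "(LINT u|lebesgue_on (cube::(real^'d::finite) set). (c::real)) = c"
  by simp

lemma sum_bern_W:
  "(\<Sum>h\<in>multi_idx n. bern n h x * ((real (h i) - real n * x$i)\<^sup>2 + c)) = real n * x$i * (1 - x$i) + c"
  by (simp add: distrib_left sum.distrib sum_bern_var sum_bern flip: sum_distrib_right)

lemma coord_bound:
  fixes s r a m :: real
  assumes "\<bar>r\<bar> \<le> a" "m > 0"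
  shows "((s + r) / m)\<^sup>2 \<le> 2 * (s\<^sup>2 + a\<^sup>2) / m\<^sup>2"
proof -
  have "r\<^sup>2 \<le> a\<^sup>2" using assms by (metis abs_le_square_iff abs_of_nonneg abs_ge_zero order_trans)
  moreover have "(s + r)\<^sup>2 \<le> 2 * s\<^sup>2 + 2 * r\<^sup>2"
    using sum_squares_ge_zero[of "s - r" 0] by (simp add: power2_eq_square algebra_simps)
  ultimately have "(s + r)\<^sup>2 \<le> 2 * (s\<^sup>2 + a\<^sup>2)" by simp
  then show ?thesis using assms by (simp add: power_divide divide_right_mono)
qed


lemma Cop_unif:
  fixes g :: "real^'d::finite \<Rightarrow> real"
  assumes a: "a > 0" and g: "continuous_on cube g" and e: "\<epsilon> > 0"
  shows "\<exists>N. \<forall>n\<ge>N. \<forall>x\<in>cube. \<bar>Cop a n g x - g x\<bar> \<le> \<epsilon>"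
proof -
  have cc: "compact cube" by (simp add: cube_def)
  obtain B where B: "B > 0" "\<And>x. x\<in>cube \<Longrightarrow> \<bar>g x\<bar> \<le> B"
    using compact_imp_bounded[OF compact_continuous_image[OF g cc]] by (auto simp: bounded_pos)
  have uc: "uniformly_continuous_on cube g" by (rule compact_uniformly_continuous[OF g cc])
  obtain \<delta> where \<delta>: "\<delta> > 0" "\<And>x y. x\<in>cube \<Longrightarrow> y\<in>cube \<Longrightarrow> dist y x < \<delta> \<Longrightarrow> dist (g y) (g x) < \<epsilon>/2"
    using uc e unfolding uniformly_continuous_on_def by (metis half_gt_zero)
  have key: "\<bar>g y - g x\<bar> \<le> \<epsilon>/2 + 2*B/\<delta>\<^sup>2 * (norm (y - x))\<^sup>2" if xy: "x\<in>cube" "y\<in>cube" for x y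
  proof (cases "dist y x < \<delta>")
    case True
    then have "\<bar>g y - g x\<bar> < \<epsilon>/2" using \<delta>(2)[OF xy] by (simp add: dist_real_def)
    moreover have "0 \<le> 2*B/\<delta>\<^sup>2 * (norm (y - x))\<^sup>2" using B by simp
    ultimately show ?thesis by linarith
  next
    case False
    then have "\<delta> \<le> norm (y - x)" by (simp add: dist_norm)
    then have "\<delta>\<^sup>2 \<le> (norm (y - x))\<^sup>2" using \<delta> by (intro power_mono) auto
    then have "1 \<le> (norm (y - x))\<^sup>2 / \<delta>\<^sup>2" using \<delta> by simp
    then have "2*B * 1 \<le> 2*B * ((norm (y - x))\<^sup>2 / \<delta>\<^sup>2)" using B by (intro mult_left_mono) auto
    moreover have "\<bar>g y - g x\<bar> \<le> 2*B" using B(2)[OF xy(1)] B(2)[OF xy(2)] by linarith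
    moreover have "2*B*((norm (y - x))\<^sup>2 / \<delta>\<^sup>2) = 2*B/\<delta>\<^sup>2 * (norm (y - x))\<^sup>2" by simp
    ultimately show ?thesis using e by linarith
  qed
  define D where "D = real CARD('d)"
  define C where "C = 4*B/\<delta>\<^sup>2 * D * (1 + a\<^sup>2)"
  have C0: "C \<ge> 0" using B by (simp add: C_def D_def)
  obtain N :: nat where N: "2 * C / \<epsilon> \<le> real N" using real_arch_simple by blast
  show ?thesis
  proof (intro exI[of _ "Suc N"] allI impI ballI)
    fix n :: nat and x :: "real^'d" assume n: "Suc N \<le> n" and x: "x \<in> cube"
    have n1: "real n \<ge> 1" "real n > 0" using n by auto
    have nN: "2 * C / \<epsilon> \<le> real n" using N n by linarith
    define K where "K = 4*B/(\<delta>\<^sup>2 * (real n + a)\<^sup>2)"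
    have K0: "K \<ge> 0" using B by (simp add: K_def)
    define W where "W h = \<epsilon>/2 + K * (\<Sum>i\<in>UNIV. (real (h i) - real n * x$i)\<^sup>2 + a\<^sup>2)" for h :: "'d \<Rightarrow> nat"
    have xi: "0 \<le> x$i" "x$i \<le> 1" for i using x by (auto simp: cube_iff)
    have bound: "\<bar>g (Tm a n h u) - g x\<bar> \<le> W h" if h: "h \<in> multi_idx n" and u: "u \<in> cube" for h u
    proof -
      have Tc: "Tm a n h u \<in> cube" by (rule Tm_in_cube[OF a h u])
      have "(norm (Tm a n h u - x))\<^sup>2 \<le> (\<Sum>i\<in>UNIV. 2 * ((real (h i) - real n * x$i)\<^sup>2 + a\<^sup>2) / (real n + a)\<^sup>2)"
        unfolding norm_sq_vec
      proof (rule sum_mono)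
        fix i
        have ui: "0 \<le> u$i" "u$i \<le> 1" using u by (auto simp: cube_iff)
        have eq: "(Tm a n h u - x) $ i = ((real (h i) - real n * x$i) + a * (u$i - x$i)) / (real n + a)"
          using a n1 by (simp add: Tm_def field_simps)
        have "\<bar>a * (u$i - x$i)\<bar> \<le> a"
          using a ui xi[of i] by (auto simp: abs_mult abs_le_iff intro: mult_left_le)
        then show "((Tm a n h u - x) $ i)\<^sup>2 \<le> 2 * ((real (h i) - real n * x$i)\<^sup>2 + a\<^sup>2) / (real n + a)\<^sup>2"
          unfolding eq using a n1 by (intro coord_bound) auto
      qed
      also have "\<dots> = 2 / (real n + a)\<^sup>2 * (\<Sum>i\<in>UNIV. (real (h i) - real n * x$i)\<^sup>2 + a\<^sup>2)"
        by (simp add: sum_distrib_left)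
      finally have "2*B/\<delta>\<^sup>2 * (norm (Tm a n h u - x))\<^sup>2 \<le> 2*B/\<delta>\<^sup>2 * (2 / (real n + a)\<^sup>2 * (\<Sum>i\<in>UNIV. (real (h i) - real n * x$i)\<^sup>2 + a\<^sup>2))"
        using B by (intro mult_left_mono) auto
      also have "\<dots> = K * (\<Sum>i\<in>UNIV. (real (h i) - real n * x$i)\<^sup>2 + a\<^sup>2)"
        by (simp add: K_def)
      finally show ?thesis using key[OF x Tc] unfolding W_def by linarith
    qed
    have int: "integrable (lebesgue_on cube) (\<lambda>u. g (Tm a n h u))" if "h \<in> multi_idx n" for h
      by (rule integrable_cont_Tm[OF a g that])
    have "Cop a n g x - g x = (\<Sum>h\<in>multi_idx n. bern n h x * (LINT u|lebesgue_on cube. g (Tm a n h u)))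
          - (\<Sum>h\<in>multi_idx n. bern n h x * g x)"
      by (simp add: Cop_Tm sum_bern flip: sum_distrib_right)
    also have "\<dots> = (\<Sum>h\<in>multi_idx n. bern n h x * (LINT u|lebesgue_on cube. g (Tm a n h u) - g x))"
    proof (simp only: sum_subtractf[symmetric], intro sum.cong refl)
      fix h :: "'d \<Rightarrow> nat" assume h: "h \<in> multi_idx n"
      have "(LINT u|lebesgue_on cube. g (Tm a n h u) - g x) = (LINT u|lebesgue_on cube. g (Tm a n h u)) - g x"
      proof -
        have ic: "integrable (lebesgue_on cube) (\<lambda>u::real^'d. g x)"
          by (rule integrable_cont_cube) simp
        show ?thesis using Bochner_Integration.integral_diff[OF int[OF h] ic] by simp
      qed
      then show "bern n h x * (LINT u|lebesgue_on cube. g (Tm a n h u)) - bern n h x * g x =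
          bern n h x * (LINT u|lebesgue_on cube. g (Tm a n h u) - g x)"
        by (simp add: right_diff_distrib)
    qed
    finally have eqC: "Cop a n g x - g x = \<dots>" .
    have "\<bar>Cop a n g x - g x\<bar> \<le> (\<Sum>h\<in>multi_idx n. \<bar>bern n h x * (LINT u|lebesgue_on cube. g (Tm a n h u) - g x)\<bar>)"
      unfolding eqC by (rule sum_abs)
    also have "\<dots> \<le> (\<Sum>h\<in>multi_idx n. bern n h x * W h)"
    proof (rule sum_mono)
      fix h :: "'d \<Rightarrow> nat" assume h: "h \<in> multi_idx n"
      have "\<bar>LINT u|lebesgue_on cube. g (Tm a n h u) - g x\<bar> \<le> (LINT u|lebesgue_on (cube::(real^'d) set). W h)"
      proof (rule Bochner_Integration.integral_abs_bound_integral[of "lebesgue_on cube" "\<lambda>u. g (Tm a n h u) - g x" "\<lambda>u. W h"])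
        have ic: "integrable (lebesgue_on cube) (\<lambda>u::real^'d. g x)"
          by (rule integrable_cont_cube) simp
        show "integrable (lebesgue_on cube) (\<lambda>u. g (Tm a n h u) - g x)"
          using Bochner_Integration.integrable_diff[OF int[OF h] ic] .
        show "integrable (lebesgue_on cube) (\<lambda>u::real^'d. W h)"
          by (rule integrable_cont_cube) simp
      qed (use bound[OF h] in auto)
      then show "\<bar>bern n h x * (LINT u|lebesgue_on cube. g (Tm a n h u) - g x)\<bar> \<le> bern n h x * W h"
        using bern_nonneg[OF x] by (simp add: abs_mult mult_left_mono)
    qed
    also have "\<dots> = \<epsilon>/2 + K * (\<Sum>i\<in>UNIV. real n * x$i * (1 - x$i) + a\<^sup>2)"
    proof -
      have "(\<Sum>h\<in>multi_idx n. bern n h x * W h) = \<epsilon>/2 * (\<Sum>h\<in>multi_idx n. bern n h x)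
          + K * (\<Sum>i\<in>UNIV. \<Sum>h\<in>multi_idx n. bern n h x * ((real (h i) - real n * x$i)\<^sup>2 + a\<^sup>2))"
      proof -
        have "(\<Sum>h\<in>multi_idx n. bern n h x * W h) = (\<Sum>h\<in>multi_idx n. \<epsilon>/2 * bern n h x
              + K * (\<Sum>i\<in>UNIV. bern n h x * ((real (h i) - real n * x$i)\<^sup>2 + a\<^sup>2)))"
        proof (intro sum.cong refl)
          fix h :: "'d \<Rightarrow> nat"
          have "bern n h x * W h = \<epsilon>/2 * bern n h x + K * (bern n h x * (\<Sum>i\<in>UNIV. (real (h i) - real n * x$i)\<^sup>2 + a\<^sup>2))"
            unfolding W_def by algebra
          then show "bern n h x * W h = \<epsilon>/2 * bern n h x + K * (\<Sum>i\<in>UNIV. bern n h x * ((real (h i) - real n * x$i)\<^sup>2 + a\<^sup>2))"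
            by (simp only: sum_distrib_left)
        qed
        also have "\<dots> = \<epsilon>/2 * (\<Sum>h\<in>multi_idx n. bern n h x)
              + K * (\<Sum>h\<in>multi_idx n. \<Sum>i\<in>UNIV. bern n h x * ((real (h i) - real n * x$i)\<^sup>2 + a\<^sup>2))"
          by (simp only: sum.distrib sum_distrib_left)
        also have "(\<Sum>h\<in>multi_idx n. \<Sum>i\<in>UNIV. bern n h x * ((real (h i) - real n * x$i)\<^sup>2 + a\<^sup>2))
              = (\<Sum>i\<in>UNIV. \<Sum>h\<in>multi_idx n. bern n h x * ((real (h i) - real n * x$i)\<^sup>2 + a\<^sup>2))"
          by (rule sum.swap)
        finally show ?thesis .
      qed
      then show ?thesis by (simp add: sum_bern sum_bern_W)
    qed
    also have "\<dots> \<le> \<epsilon>/2 + K * (\<Sum>i\<in>(UNIV::'d set). real n + a\<^sup>2)"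
    proof -
      have "real n * x$i * (1 - x$i) \<le> real n" for i
      proof -
        have "x$i * (1 - x$i) \<le> 1" using xi[of i] by (intro mult_le_one) auto
        then have "real n * (x$i * (1 - x$i)) \<le> real n * 1" using n1 by (intro mult_left_mono) auto
        then show ?thesis by (simp add: mult.assoc)
      qed
      then show ?thesis using K0 by (intro add_left_mono mult_left_mono sum_mono) auto
    qed
    also have "\<dots> = \<epsilon>/2 + 4*B/\<delta>\<^sup>2 * D * ((real n + a\<^sup>2) / (real n + a)\<^sup>2)"
    proof -
      have "(\<Sum>i\<in>(UNIV::'d set). real n + a\<^sup>2) = D * (real n + a\<^sup>2)" by (simp add: D_def)
      then show ?thesis unfolding K_def by simp
    qed
    also have "\<dots> \<le> \<epsilon>/2 + 4*B/\<delta>\<^sup>2 * D * ((1 + a\<^sup>2) / real n)"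
    proof -
      have "(real n + a\<^sup>2) / (real n + a)\<^sup>2 \<le> (1 + a\<^sup>2) / real n"
      proof -
        have "(real n)\<^sup>2 \<le> (real n + a)\<^sup>2" using a n1 by (intro power_mono) auto
        then have "(1 + a\<^sup>2) * (real n)\<^sup>2 \<le> (1 + a\<^sup>2) * (real n + a)\<^sup>2" by (intro mult_left_mono) auto
        moreover have "real n * (real n + a\<^sup>2) \<le> (1 + a\<^sup>2) * (real n)\<^sup>2"
        proof -
          have "real n * 1 \<le> real n * real n" using n1 by (intro mult_left_mono) auto
          then have "a\<^sup>2 * real n \<le> a\<^sup>2 * (real n * real n)" by (intro mult_left_mono) auto
          then show ?thesis by (simp add: power2_eq_square algebra_simps)
        qed
        ultimately have "real n * (real n + a\<^sup>2) \<le> (1 + a\<^sup>2) * (real n + a)\<^sup>2" by linarith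
        then show ?thesis using a n1 by (simp add: divide_le_eq le_divide_eq mult.commute)
      qed
      then show ?thesis using B by (intro add_left_mono mult_left_mono) (auto simp: D_def)
    qed
    also have "\<dots> = \<epsilon>/2 + C / real n" by (simp add: C_def)
    also have "\<dots> \<le> \<epsilon>/2 + \<epsilon>/2"
    proof -
      have "C / real n \<le> \<epsilon>/2" using nN e n1 C0 by (simp add: divide_le_eq le_divide_eq mult.commute)
      then show ?thesis by linarith
    qed
    finally show "\<bar>Cop a n g x - g x\<bar> \<le> \<epsilon>" by simp
  qed
qed


lemma Beta_nat: "Beta (real k + 1) (real m + 1) = fact k * fact m / fact (k + m + 1)"
proof -
  have "Gamma (real k + 1) = fact k" using Gamma_fact[of k] by (simp add: add.commute)
  moreover have "Gamma (real m + 1) = fact m" using Gamma_fact[of m] by (simp add: add.commute)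
  moreover have "Gamma (real k + 1 + (real m + 1)) = fact (k + m + 1)"
    using Gamma_fact[of "k + m + 1"] by (simp add: add_ac)
  ultimately show ?thesis by (simp add: Beta_def)
qed

lemma Bernstein_has_integral:
  assumes kn: "k \<le> n"
  shows "(Bernstein n k has_integral 1 / (real n + 1)) {0..1}"
proof -
  have B: "Beta (real k + 1) (real (n - k) + 1) = fact k * fact (n - k) / fact (n + 1)"
    using Beta_nat[of k "n - k"] kn by simp
  have "((\<lambda>t. t powr real k * (1 - t) powr real (n - k)) has_integral
          fact k * fact (n - k) / fact (n + 1)) {0..1}"
    using has_integral_Beta_real[of "real k + 1" "real (n - k) + 1"]
    unfolding add_diff_cancel_right' B by simp
  then have I: "((\<lambda>t. real (n choose k) * (t powr real k * (1 - t) powr real (n - k))) has_integral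
          real (n choose k) * (fact k * fact (n - k) / fact (n + 1))) {0..1}"
    by (rule has_integral_mult_right)
  have "real (n choose k) * (fact k * fact (n - k) / fact (n + 1)) = fact n / fact (n + 1)"
    using binomial_fact_lemma[OF kn]
    by (metis (mono_tags, lifting) mult.commute of_nat_fact of_nat_mult times_divide_eq_right)
  also have "\<dots> = 1 / (real n + 1)"
  proof -
    have "fact (n + 1) = (real n + 1) * (fact n :: real)" by simp
    then show ?thesis by simp
  qed
  finally have eq: "real (n choose k) * (fact k * fact (n - k) / fact (n + 1)) = 1 / (real n + 1)" .
  show ?thesis
  proof (rule has_integral_spike_finite[of "{0,1}"])
    show "Bernstein n k x = real (n choose k) * (x powr real k * (1 - x) powr real (n - k))"
      if "x \<in> {0..1} - {0,1}" for x
      using that by (auto simp: Bernstein_def powr_realpow)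
    show "((\<lambda>t. real (n choose k) * (t powr real k * (1 - t) powr real (n - k))) has_integral 1 / (real n + 1)) {0..1}"
      using I eq by simp
  qed simp
qed

lemma Bernstein_nn_integral:
  assumes kn: "k \<le> n"
  shows "(\<integral>\<^sup>+t. ennreal (indicator {0..1} t * Bernstein n k t) \<partial>lborel) = ennreal (1 / (real n + 1))"
  by (rule nn_integral_has_integral_lebesgue[OF _ Bernstein_has_integral[OF kn]]) (auto intro: Bernstein_nonneg)

lemma Basis_vec_range: "(Basis :: (real^'d::finite) set) = (\<lambda>j. axis j 1) ` UNIV"
  by (auto simp: Basis_vec_def)

lemma inj_axis1: "inj (\<lambda>j::'d::finite. axis j (1::real))"
  by (auto simp: inj_on_def axis_eq_axis)

lemma prod_Basis_vec:
  fixes G :: "real^'d::finite \<Rightarrow> 'c::comm_monoid_mult"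
  shows "(\<Prod>b\<in>Basis. G b) = (\<Prod>i\<in>UNIV. G (axis i 1))"
  unfolding Basis_vec_range by (simp add: prod.reindex[OF inj_axis1])

lemma indicator_cube: "indicator cube x = (\<Prod>i\<in>UNIV. indicator {0..1::real} (x$i) :: real)"
proof (cases "x \<in> cube")
  case True then show ?thesis by (simp add: cube_iff)
next
  case False
  then obtain i where "\<not> (0 \<le> x$i \<and> x$i \<le> 1)" by (auto simp: cube_iff)
  then have "indicator {0..1::real} (x$i) = (0::real)" by simp
  then show ?thesis using False by (simp add: prod_zero_iff) (metis)
qed

lemma bern_nn_integral:
  fixes h :: "'d::finite \<Rightarrow> nat"
  assumes h: "h \<in> multi_idx n"
  shows "(\<integral>\<^sup>+x. ennreal (indicator cube x * bern n h x) \<partial>lborel) = ennreal ((1 / (real n + 1)) ^ CARD('d))"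
proof -
  define F where "F b t = ennreal (indicator {0..1} t * Bernstein n (h (SOME i. b = axis i 1)) t)"
    for b :: "real^'d" and t :: real
  have Fax: "F (axis i 1) t = ennreal (indicator {0..1} t * Bernstein n (h i) t)" for i t
  proof -
    have "(SOME j. axis i (1::real) = axis j 1) = i"
      by (rule some_equality) (auto simp: axis_eq_axis)
    then show ?thesis by (simp add: F_def)
  qed
  have eq: "ennreal (indicator cube x * bern n h x) = (\<Prod>b\<in>Basis. F b (x \<bullet> b))" for x :: "real^'d"
  proof -
    have "indicator cube x * bern n h x = (\<Prod>i\<in>UNIV. indicator {0..1} (x$i) * Bernstein n (h i) (x$i))"
      by (simp add: indicator_cube bern_eq prod.distrib)
    then have "ennreal (indicator cube x * bern n h x) = (\<Prod>i\<in>UNIV. ennreal (indicator {0..1} (x$i) * Bernstein n (h i) (x$i)))"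
      by (simp add: prod_ennreal Bernstein_nonneg indicator_def)
    also have "\<dots> = (\<Prod>b\<in>Basis. F b (x \<bullet> b))"
      by (simp add: prod_Basis_vec Fax inner_axis)
    finally show ?thesis .
  qed
  have "(\<integral>\<^sup>+x. ennreal (indicator cube x * bern n h x) \<partial>lborel) = (\<integral>\<^sup>+x. (\<Prod>b\<in>Basis. F b (x \<bullet> b)) \<partial>lborel)"
    by (simp add: eq)
  also have "\<dots> = (\<Prod>b\<in>Basis. (\<integral>\<^sup>+t. F b t \<partial>lborel))"
  proof (rule nn_integral_lborel_prod)
    fix b :: "real^'d"
    show "F b \<in> borel_measurable borel"
      unfolding F_def Bernstein_def by measurable
  qed simp
  also have "\<dots> = (\<Prod>i\<in>UNIV. (\<integral>\<^sup>+t. F (axis i 1) t \<partial>lborel))"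
    by (rule prod_Basis_vec)
  also have "\<dots> = (\<Prod>i\<in>(UNIV::'d set). ennreal (1 / (real n + 1)))"
    using h by (intro prod.cong refl) (simp add: Fax Bernstein_nn_integral multi_idx_def)
  also have "\<dots> = ennreal ((1 / (real n + 1)) ^ CARD('d))"
    by (simp add: ennreal_power)
  finally show ?thesis .
qed


lemma affine_vec_eq: "(\<lambda>x. t + (\<Sum>j\<in>Basis. (c * (x \<bullet> j)) *\<^sub>R j)) = (\<lambda>x::real^'d::finite. t + c *\<^sub>R x)"
  unfolding scaleR_scaleR[symmetric] scaleR_sum_right[symmetric] euclidean_representation by simp

lemma nn_integral_affine_lebesgue:
  fixes f :: "real^'d::finite \<Rightarrow> ennreal"
  assumes f[measurable]: "f \<in> borel_measurable lebesgue" and c: "c \<noteq> 0"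
  shows "(\<integral>\<^sup>+x. f x \<partial>lebesgue) = ennreal (\<bar>c\<bar> ^ CARD('d)) * (\<integral>\<^sup>+x. f (t + c *\<^sub>R x) \<partial>lebesgue)"
proof -
  have L: "lebesgue = density (distr lebesgue lebesgue (\<lambda>x::real^'d. t + c *\<^sub>R x)) (\<lambda>_. ennreal (\<bar>c\<bar> ^ CARD('d)))"
    using lebesgue_affine_euclidean[of "\<lambda>_. c" t] c unfolding affine_vec_eq by (simp add: prod_constant)
  have M: "(\<lambda>x::real^'d. t + c *\<^sub>R x) \<in> lebesgue \<rightarrow>\<^sub>M lebesgue"
    using lebesgue_affine_measurable[of "\<lambda>_. c" t] c unfolding affine_vec_eq by simp
  have "(\<integral>\<^sup>+x. f x \<partial>lebesgue) = (\<integral>\<^sup>+x. f x \<partial>density (distr lebesgue lebesgue (\<lambda>x::real^'d. t + c *\<^sub>R x)) (\<lambda>_. ennreal (\<bar>c\<bar> ^ CARD('d))))"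
    using L by simp
  also have "\<dots> = (\<integral>\<^sup>+x. ennreal (\<bar>c\<bar> ^ CARD('d)) * f x \<partial>distr lebesgue lebesgue (\<lambda>x. t + c *\<^sub>R x))"
    by (subst nn_integral_density) auto
  also have "\<dots> = ennreal (\<bar>c\<bar> ^ CARD('d)) * (\<integral>\<^sup>+x. f x \<partial>distr lebesgue lebesgue (\<lambda>x. t + c *\<^sub>R x))"
    using f measurable_distr_eq1 nn_integral_cmult by blast
  also have "\<dots> = ennreal (\<bar>c\<bar> ^ CARD('d)) * (\<integral>\<^sup>+x. f (t + c *\<^sub>R x) \<partial>lebesgue)"
    using M by (subst nn_integral_distr) auto
  finally show ?thesis .
qed

lemma card_window:
  fixes K :: "nat set" and s a :: real
  assumes K: "finite K" and a: "a \<ge> 0" and w: "\<And>k. k \<in> K \<Longrightarrow> s - a \<le> real k \<and> real k \<le> s"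
  shows "real (card K) \<le> a + 1"
proof (cases "K = {}")
  case True then show ?thesis using a by simp
next
  case False
  have sub: "K \<subseteq> {Min K..Max K}" using K by auto
  have "card K \<le> card {Min K..Max K}" using sub by (intro card_mono) auto
  also have "\<dots> = Max K + 1 - Min K" by simp
  finally have c: "real (card K) \<le> real (Max K) + 1 - real (Min K)"
    using Min_le[OF K Max_in[OF K False]] by linarith
  have "real (Max K) \<le> s" using w[OF Max_in[OF K False]] by simp
  moreover have "s - a \<le> real (Min K)" using w[OF Min_in[OF K False]] by simp
  ultimately show ?thesis using c by linarith
qed

definition ind :: "real \<Rightarrow> nat \<Rightarrow> ('d::finite \<Rightarrow> nat) \<Rightarrow> real^'d \<Rightarrow> real" where
  "ind a n h y = (\<Prod>i\<in>UNIV. indicator {real (h i) / (real n + a) .. (real (h i) + a) / (real n + a)} (y$i))"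

lemma ind_nonneg: "0 \<le> ind a n h y"
  by (simp add: ind_def prod_nonneg)

lemma sum_ind_le:
  assumes a: "a > 0"
  shows "(\<Sum>h\<in>multi_idx n. ind a n (h::'d::finite \<Rightarrow> nat) y) \<le> (a + 1) ^ CARD('d)"
proof -
  have "(\<Sum>h\<in>multi_idx n. ind a n (h::'d \<Rightarrow> nat) y) =
      (\<Prod>i\<in>UNIV. \<Sum>k\<le>n. indicator {real k / (real n + a) .. (real k + a) / (real n + a)} (y$i))"
    unfolding ind_def by (rule sum_multi_prod)
  also have "\<dots> \<le> (\<Prod>i\<in>(UNIV::'d set). a + 1)"
  proof (rule prod_mono)
    fix i :: 'd
    let ?P = "\<lambda>k. y$i \<in> {real k / (real n + a) .. (real k + a) / (real n + a)}"
    have "(\<Sum>k\<le>n. indicator {real k / (real n + a) .. (real k + a) / (real n + a)} (y$i)) =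
          (\<Sum>k\<le>n. if ?P k then 1 else (0::real))"
      by (intro sum.cong refl) (simp add: indicator_def)
    also have "\<dots> = (\<Sum>k\<in>{k\<in>{..n}. ?P k}. (1::real))"
      by (rule sum.inter_filter[symmetric]) simp
    also have "\<dots> = real (card {k\<in>{..n}. ?P k})" by simp
    also have "\<dots> \<le> a + 1"
    proof (rule card_window[where s="(real n + a) * y$i"])
      fix k assume "k \<in> {k\<in>{..n}. ?P k}"
      then have "real k / (real n + a) \<le> y$i" "y$i \<le> (real k + a) / (real n + a)" by auto
      then show "(real n + a) * y$i - a \<le> real k \<and> real k \<le> (real n + a) * y$i"
        using a by (auto simp: divide_le_eq le_divide_eq mult.commute)
    qed (use a in auto)
    finally show "0 \<le> (\<Sum>k\<le>n. indicator {real k / (real n + a) .. (real k + a) / (real n + a)} (y$i) :: real) \<and>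
        (\<Sum>k\<le>n. indicator {real k / (real n + a) .. (real k + a) / (real n + a)} (y$i)) \<le> a + 1"
      by (simp add: sum_nonneg)
  qed
  also have "\<dots> = (a + 1) ^ CARD('d)" by simp
  finally show ?thesis .
qed

lemma ind_Tm:
  assumes a: "a > 0"
  shows "ind a n h (Tm a n h u) = indicator cube u"
proof -
  have "indicator {real (h i) / (real n + a) .. (real (h i) + a) / (real n + a)} (Tm a n h u $ i) =
        (indicator {0..1} (u$i) :: real)" for i
  proof -
    have pos: "real n + a > 0" using a by simp
    have "Tm a n h u $ i \<in> {real (h i) / (real n + a) .. (real (h i) + a) / (real n + a)} \<longleftrightarrow> u$i \<in> {0..1}"
      using pos a by (simp add: Tm_def divide_le_cancel zero_le_mult_iff mult_le_cancel_left1)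
    then show ?thesis by (simp add: indicator_def)
  qed
  then show ?thesis by (simp add: ind_def indicator_cube)
qed


lemma cont_bern: "continuous_on S (bern n h)"
  unfolding bern_def[abs_def] by (intro continuous_intros)

lemma cont_Cop: "continuous_on S (Cop a n f)"
  unfolding Cop_Tm[abs_def] by (intro continuous_intros cont_bern)

lemma meas_M_cont:
  assumes "continuous_on UNIV f"
  shows "(f :: real^'d::finite \<Rightarrow> real) \<in> borel_measurable (lebesgue_on cube)"
  by (rule continuous_imp_measurable_on_sets_lebesgue) (auto intro: continuous_on_subset[OF assms])

lemma nn_integral_M:
  "(\<integral>\<^sup>+x. f x \<partial>lebesgue_on cube) = (\<integral>\<^sup>+x. f x * indicator cube x \<partial>lebesgue)"
  by (rule nn_integral_restrict_space) simp

lemma integral_bern_M: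
  fixes h :: "'d::finite \<Rightarrow> nat"
  assumes h: "h \<in> multi_idx n"
  shows "integrable (lebesgue_on cube) (bern n h) \<and> (LINT x|lebesgue_on cube. bern n h x) = (1 / (real n + 1)) ^ CARD('d)"
proof -
  have "(\<integral>\<^sup>+x. ennreal (bern n h x) \<partial>lebesgue_on cube) = (\<integral>\<^sup>+x. ennreal (bern n h x) * indicator cube x \<partial>lebesgue)"
    by (rule nn_integral_M)
  also have "\<dots> = (\<integral>\<^sup>+x. ennreal (indicator cube x * bern n h x) \<partial>lborel)"
    by (simp add: nn_integral_completion) (rule nn_integral_cong; simp split: split_indicator)
  also have "\<dots> = ennreal ((1 / (real n + 1)) ^ CARD('d))"
    by (rule bern_nn_integral[OF h])
  finally have eq: "(\<integral>\<^sup>+x. ennreal (bern n h x) \<partial>lebesgue_on cube) = ennreal ((1 / (real n + 1)) ^ CARD('d))" .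
  show ?thesis
  proof (rule nn_integral_eq_integrable[THEN iffD1, OF _ _ _ eq])
    show "bern n h \<in> borel_measurable (lebesgue_on cube)"
      by (rule meas_M_cont[OF cont_bern])
    show "AE x in lebesgue_on cube. 0 \<le> bern n h x"
      by (rule AE_I2) (simp add: bern_nonneg)
  qed simp
qed

lemma abs_le_powr: "p \<ge> 1 \<Longrightarrow> \<bar>y::real\<bar> \<le> 1 + \<bar>y\<bar> powr p"
proof (cases "\<bar>y\<bar> \<le> 1")
  case True then show ?thesis by (simp add: add_increasing2)
next
  case False
  assume p: "p \<ge> 1"
  have "\<bar>y\<bar> powr 1 \<le> \<bar>y\<bar> powr p" using False p by (intro powr_mono) auto
  then show ?thesis using False by simp
qed

lemma integrable_from_powr:
  fixes g :: "'a \<Rightarrow> real"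
  assumes "finite_measure N" "p \<ge> 1" "g \<in> borel_measurable N" "integrable N (\<lambda>x. \<bar>g x\<bar> powr p)"
  shows "integrable N g"
proof (rule Bochner_Integration.integrable_bound[where M=N and f="\<lambda>x. 1 + \<bar>g x\<bar> powr p"])
  interpret finite_measure N by fact
  show "integrable N (\<lambda>x. 1 + \<bar>g x\<bar> powr p)" using assms(4) by simp
  show "g \<in> borel_measurable N" by fact
  show "AE x in N. norm (g x) \<le> norm (1 + \<bar>g x\<bar> powr p)"
    using abs_le_powr[OF assms(2)] by (auto intro!: AE_I2 simp: abs_le_iff)
qed


lemma vec_nth_meas_leb [measurable]: "(\<lambda>y::real^'d::finite. y $ i) \<in> borel_measurable lebesgue"
proof -
  have "(\<lambda>y::real^'d. y $ i) \<in> borel_measurable (lebesgue_on UNIV)"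
    by (rule continuous_imp_measurable_on_sets_lebesgue) (auto intro: continuous_intros)
  then show ?thesis by simp
qed

lemma ind_meas [measurable]: "ind a n h \<in> borel_measurable lebesgue"
  unfolding ind_def by measurable

lemma finite_M: "finite_measure (lebesgue_on cube)"
  using prob_M unfolding prob_space_def by blast

lemma const_bound_arith:
  fixes a :: real and n :: nat
  assumes a: "a > 0"
  shows "(a + 1) / ((real n + 1) * (a / (real n + a))) \<le> (a + 1)\<^sup>2 / a"
proof -
  have pos: "real n + a > 0" "real n + 1 > 0" using a by auto
  have "(a + 1) / ((real n + 1) * (a / (real n + a))) = (a + 1) * ((real n + a) / (real n + 1)) / a"
    using pos a by (simp add: field_simps)
  also have "\<dots> \<le> (a + 1) * (a + 1) / a"
  proof -
    have "(real n + a) / (real n + 1) \<le> a + 1"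
      using pos a by (simp add: divide_le_eq algebra_simps)
    then show ?thesis using a by (intro divide_right_mono mult_left_mono) auto
  qed
  finally show ?thesis by (simp add: power2_eq_square)
qed


lemma Cop_bound:
  fixes \<phi> :: "real^'d::finite \<Rightarrow> real" and a p :: real and n :: nat
  assumes a: "a > 0" and p: "p \<ge> 1"
    and \<phi>m: "\<phi> \<in> borel_measurable (lebesgue_on cube)"
    and \<phi>i: "integrable (lebesgue_on cube) (\<lambda>x. \<bar>\<phi> x\<bar> powr p)"
  shows "(\<forall>h\<in>multi_idx n. integrable (lebesgue_on cube) (\<lambda>u. \<phi> (Tm a n h u)))
       \<and> integrable (lebesgue_on cube) (\<lambda>x. \<bar>Cop a n \<phi> x\<bar> powr p)
       \<and> (LINT x|lebesgue_on cube. \<bar>Cop a n \<phi> x\<bar> powr p) \<le> ((a+1)\<^sup>2/a) ^ CARD('d) * (LINT x|lebesgue_on cube. \<bar>\<phi> x\<bar> powr p)"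
proof -
  define c where "c = a / (real n + a)"
  have c0: "c > 0" using a by (simp add: c_def)
  define d where "d = CARD('d)"
  define \<phi>0 where "\<phi>0 y = indicator cube y * \<phi> y" for y
  have \<phi>0m [measurable]: "\<phi>0 \<in> borel_measurable lebesgue"
    using \<phi>m unfolding \<phi>0_def[abs_def] by (subst (asm) borel_measurable_restrict_space_iff) auto
  define L where "L = (LINT x|lebesgue_on cube. \<bar>\<phi> x\<bar> powr p)"
  have L0: "L \<ge> 0" by (simp add: L_def)
  define Q where "Q y = ennreal (\<bar>\<phi>0 y\<bar> powr p)" for y
  have Qm [measurable]: "Q \<in> borel_measurable lebesgue" unfolding Q_def[abs_def] by measurable
  have QL: "(\<integral>\<^sup>+y. Q y \<partial>lebesgue) = ennreal L"
  proof -
    have "ennreal L = (\<integral>\<^sup>+x. ennreal (\<bar>\<phi> x\<bar> powr p) \<partial>lebesgue_on cube)"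
      unfolding L_def by (rule nn_integral_eq_integral[OF \<phi>i, symmetric]) simp
    also have "\<dots> = (\<integral>\<^sup>+x. ennreal (\<bar>\<phi> x\<bar> powr p) * indicator cube x \<partial>lebesgue)"
      by (rule nn_integral_M)
    also have "\<dots> = (\<integral>\<^sup>+y. Q y \<partial>lebesgue)"
      by (intro nn_integral_cong) (simp add: Q_def \<phi>0_def split: split_indicator)
    finally show ?thesis ..
  qed
  define \<psi> where "\<psi> h y = ennreal (ind a n h y * \<bar>\<phi>0 y\<bar> powr p)" for h y
  have \<psi>m [measurable]: "\<psi> h \<in> borel_measurable lebesgue" for h
    unfolding \<psi>_def[abs_def] by measurable
  define J where "J h = (\<integral>\<^sup>+u. ennreal (\<bar>\<phi> (Tm a n h u)\<bar> powr p) \<partial>lebesgue_on cube)" for h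
  have Jeq: "ennreal (c ^ d) * J h = (\<integral>\<^sup>+y. \<psi> h y \<partial>lebesgue)" if h: "h \<in> multi_idx n" for h
  proof -
    have "J h = (\<integral>\<^sup>+u. ennreal (\<bar>\<phi> (Tm a n h u)\<bar> powr p) * indicator cube u \<partial>lebesgue)"
      unfolding J_def by (rule nn_integral_M)
    also have "\<dots> = (\<integral>\<^sup>+u. \<psi> h (tv a n h + c *\<^sub>R u) \<partial>lebesgue)"
    proof (rule nn_integral_cong)
      fix u :: "real^'d"
      have e1: "tv a n h + c *\<^sub>R u = Tm a n h u" by (simp add: Tm_affine c_def)
      show "ennreal (\<bar>\<phi> (Tm a n h u)\<bar> powr p) * indicator cube u = \<psi> h (tv a n h + c *\<^sub>R u)"
      proof (cases "u \<in> cube")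
        case True
        then have "Tm a n h u \<in> cube" by (rule Tm_in_cube[OF a h])
        then show ?thesis using True unfolding e1 \<psi>_def \<phi>0_def ind_Tm[OF a] by simp
      next
        case False
        then show ?thesis unfolding e1 \<psi>_def ind_Tm[OF a] by simp
      qed
    qed
    finally have "J h = (\<integral>\<^sup>+u. \<psi> h (tv a n h + c *\<^sub>R u) \<partial>lebesgue)" .
    moreover have "(\<integral>\<^sup>+y. \<psi> h y \<partial>lebesgue) = ennreal (\<bar>c\<bar> ^ CARD('d)) * (\<integral>\<^sup>+u. \<psi> h (tv a n h + c *\<^sub>R u) \<partial>lebesgue)"
      by (rule nn_integral_affine_lebesgue) (use c0 in auto)
    ultimately show ?thesis using c0 by (simp add: d_def)
  qed
  have sum\<psi>: "(\<Sum>h\<in>multi_idx n. (\<integral>\<^sup>+y. \<psi> h y \<partial>lebesgue)) \<le> ennreal ((a + 1) ^ d * L)"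
  proof -
    have "(\<Sum>h\<in>multi_idx n. (\<integral>\<^sup>+y. \<psi> h y \<partial>lebesgue)) = (\<integral>\<^sup>+y. (\<Sum>h\<in>multi_idx n. \<psi> h y) \<partial>lebesgue)"
      by (rule nn_integral_sum[symmetric]) simp
    also have "\<dots> \<le> (\<integral>\<^sup>+y. ennreal ((a + 1) ^ d) * Q y \<partial>lebesgue)"
    proof (rule nn_integral_mono)
      fix y :: "real^'d"
      have "(\<Sum>h\<in>multi_idx n. \<psi> h y) = ennreal (\<Sum>h\<in>multi_idx n. ind a n h y * \<bar>\<phi>0 y\<bar> powr p)"
        unfolding \<psi>_def by (rule sum_ennreal) (simp add: ind_nonneg)
      also have "\<dots> \<le> ennreal ((a + 1) ^ d * \<bar>\<phi>0 y\<bar> powr p)"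
      proof (rule ennreal_leI)
        have "(\<Sum>h\<in>multi_idx n. ind a n h y * \<bar>\<phi>0 y\<bar> powr p) = (\<Sum>h\<in>multi_idx n. ind a n h y) * \<bar>\<phi>0 y\<bar> powr p"
          by (simp add: sum_distrib_right)
        also have "\<dots> \<le> (a + 1) ^ d * \<bar>\<phi>0 y\<bar> powr p"
          using sum_ind_le[OF a, of n y] by (intro mult_right_mono) (auto simp: d_def)
        finally show "(\<Sum>h\<in>multi_idx n. ind a n h y * \<bar>\<phi>0 y\<bar> powr p) \<le> (a + 1) ^ d * \<bar>\<phi>0 y\<bar> powr p" .
      qed
      also have "\<dots> = ennreal ((a + 1) ^ d) * Q y"
        using a by (simp add: Q_def ennreal_mult)
      finally show "(\<Sum>h\<in>multi_idx n. \<psi> h y) \<le> ennreal ((a + 1) ^ d) * Q y" .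
    qed
    also have "\<dots> = ennreal ((a + 1) ^ d) * ennreal L"
      by (simp add: nn_integral_cmult QL)
    also have "\<dots> = ennreal ((a + 1) ^ d * L)"
      using a L0 by (simp add: ennreal_mult)
    finally show ?thesis .
  qed
  have Jfin: "J h < \<infinity>" if h: "h \<in> multi_idx n" for h
  proof -
    have "ennreal (c ^ d) * J h \<le> (\<Sum>h\<in>multi_idx n. (\<integral>\<^sup>+y. \<psi> h y \<partial>lebesgue))"
      unfolding Jeq[OF h] by (rule member_le_sum) (use h finite_multi_idx in auto)
    also have "\<dots> < \<infinity>" using sum\<psi> by (simp add: le_less_trans)
    finally have "ennreal (c ^ d) * J h < \<infinity>" .
    then show ?thesis using c0 by (auto simp: ennreal_mult_less_top)
  qed
  have Tm_meas: "(\<lambda>u. \<phi> (Tm a n h u)) \<in> borel_measurable (lebesgue_on cube)" if h: "h \<in> multi_idx n" for h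
  proof -
    have "(\<lambda>u. \<phi>0 (tv a n h + c *\<^sub>R u)) \<in> borel_measurable lebesgue"
      by (rule borel_measurable_affine[OF \<phi>0m]) (use c0 in auto)
    then have "(\<lambda>u. \<phi>0 (tv a n h + c *\<^sub>R u)) \<in> borel_measurable (lebesgue_on cube)"
      by (rule measurable_restrict_space1)
    then show ?thesis
    proof (rule measurable_cong[THEN iffD1, rotated])
      fix u assume "u \<in> space (lebesgue_on (cube::(real^'d) set))"
      then have u: "u \<in> cube" by simp
      have "Tm a n h u \<in> cube" by (rule Tm_in_cube[OF a h u])
      then show "\<phi>0 (tv a n h + c *\<^sub>R u) = \<phi> (Tm a n h u)"
        by (simp add: \<phi>0_def Tm_affine c_def)
    qed
  qed
  have int_pow: "integrable (lebesgue_on cube) (\<lambda>u. \<bar>\<phi> (Tm a n h u)\<bar> powr p)" if h: "h \<in> multi_idx n" for h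
    unfolding integrable_iff_bounded
  proof
    show "(\<lambda>u. \<bar>\<phi> (Tm a n h u)\<bar> powr p) \<in> borel_measurable (lebesgue_on cube)"
      using Tm_meas[OF h] by measurable
    show "(\<integral>\<^sup>+u. ennreal (norm (\<bar>\<phi> (Tm a n h u)\<bar> powr p)) \<partial>lebesgue_on cube) < \<infinity>"
      using Jfin[OF h] by (simp add: J_def)
  qed
  have int_T: "integrable (lebesgue_on cube) (\<lambda>u. \<phi> (Tm a n h u))" if h: "h \<in> multi_idx n" for h
    by (rule integrable_from_powr[OF finite_M p Tm_meas[OF h] int_pow[OF h]])
  define R where "R h = (LINT u|lebesgue_on cube. \<bar>\<phi> (Tm a n h u)\<bar> powr p)" for h
  have R0: "R h \<ge> 0" for h by (simp add: R_def)
  have JR: "J h = ennreal (R h)" if h: "h \<in> multi_idx n" for h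
    unfolding J_def R_def by (rule nn_integral_eq_integral[OF int_pow[OF h]]) simp
  have sumR: "c ^ d * (\<Sum>h\<in>multi_idx n. R h) \<le> (a + 1) ^ d * L"
  proof -
    have "(\<Sum>h\<in>multi_idx n. ennreal (c ^ d) * J h) = (\<Sum>h\<in>multi_idx n. ennreal (c ^ d * R h))"
      by (intro sum.cong refl) (simp add: JR ennreal_mult c0 R0 less_imp_le)
    also have "\<dots> = ennreal (\<Sum>h\<in>multi_idx n. c ^ d * R h)"
      by (rule sum_ennreal) (simp add: R0 c0 less_imp_le)
    finally have "ennreal (c ^ d * (\<Sum>h\<in>multi_idx n. R h)) = (\<Sum>h\<in>multi_idx n. ennreal (c ^ d) * J h)"
      by (simp add: sum_distrib_left)
    also have "\<dots> = (\<Sum>h\<in>multi_idx n. (\<integral>\<^sup>+y. \<psi> h y \<partial>lebesgue))"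
      by (intro sum.cong refl Jeq)
    also have "\<dots> \<le> ennreal ((a + 1) ^ d * L)" by (rule sum\<psi>)
    finally show ?thesis using a L0 by (simp add: ennreal_le_iff)
  qed
  define Bd where "Bd x = (\<Sum>h\<in>multi_idx n. bern n h x * R h)" for x
  have pw: "\<bar>Cop a n \<phi> x\<bar> powr p \<le> Bd x" if x: "x \<in> cube" for x
  proof -
    define I where "I h = (LINT u|lebesgue_on cube. \<phi> (Tm a n h u))" for h
    have "\<bar>Cop a n \<phi> x\<bar> powr p = \<bar>\<Sum>h\<in>multi_idx n. bern n h x *\<^sub>R I h\<bar> powr p"
      by (simp add: Cop_Tm I_def)
    also have "\<dots> \<le> (\<Sum>h\<in>multi_idx n. bern n h x * \<bar>I h\<bar> powr p)"
      by (rule convex_on_sum[OF finite_multi_idx multi_idx_ne cvx_abs[OF p]]) (auto simp: sum_bern bern_nonneg[OF x])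
    also have "\<dots> \<le> Bd x"
      unfolding Bd_def
    proof (rule sum_mono)
      fix h :: "'d \<Rightarrow> nat" assume h: "h \<in> multi_idx n"
      have "\<bar>I h\<bar> powr p \<le> R h"
        unfolding I_def R_def by (rule jensen_abs_powr[OF prob_M p int_T[OF h] int_pow[OF h]])
      then show "bern n h x * \<bar>I h\<bar> powr p \<le> bern n h x * R h"
        by (rule mult_left_mono) (rule bern_nonneg[OF x])
    qed
    finally show ?thesis .
  qed
  have Bd_int: "integrable (lebesgue_on cube) Bd"
    unfolding Bd_def[abs_def] by (intro integrable_cont_cube continuous_intros cont_bern)
  have Bd_val: "(LINT x|lebesgue_on cube. Bd x) = (1 / (real n + 1)) ^ d * (\<Sum>h\<in>multi_idx n. R h)"
  proof -
    have "(LINT x|lebesgue_on cube. Bd x) = (\<Sum>h\<in>multi_idx n. (LINT x|lebesgue_on cube. bern n h x) * R h)"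
    proof -
      have "(LINT x|lebesgue_on cube. Bd x) = (\<Sum>h\<in>multi_idx n. LINT x|lebesgue_on cube. bern n h x * R h)"
        unfolding Bd_def
        by (rule Bochner_Integration.integral_sum) (intro integrable_cont_cube continuous_intros cont_bern)
      then show ?thesis by simp
    qed
    also have "\<dots> = (\<Sum>h\<in>multi_idx n. (1 / (real n + 1)) ^ d * R h)"
    proof (intro sum.cong refl)
      fix h :: "'d \<Rightarrow> nat" assume h: "h \<in> multi_idx n"
      show "(LINT x|lebesgue_on cube. bern n h x) * R h = (1 / (real n + 1)) ^ d * R h"
        using integral_bern_M[OF h] by (simp add: d_def)
    qed
    finally show ?thesis by (simp add: sum_distrib_left)
  qed
  have Cm: "(\<lambda>x. \<bar>Cop a n \<phi> x\<bar> powr p) \<in> borel_measurable (lebesgue_on cube)"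
    using meas_M_cont[OF cont_Cop] by measurable
  have Cint: "integrable (lebesgue_on cube) (\<lambda>x. \<bar>Cop a n \<phi> x\<bar> powr p)"
  proof (rule Bochner_Integration.integrable_bound[OF Bd_int Cm])
    show "AE x in lebesgue_on cube. norm (\<bar>Cop a n \<phi> x\<bar> powr p) \<le> norm (Bd x)"
        by (rule AE_I2) (use pw in \<open>force intro: order_trans[OF _ abs_ge_self]\<close>)
  qed
  have "(LINT x|lebesgue_on cube. \<bar>Cop a n \<phi> x\<bar> powr p) \<le> (LINT x|lebesgue_on cube. Bd x)"
    by (rule integral_mono[OF Cint Bd_int]) (use pw in auto)
  also have "\<dots> = (1 / (real n + 1)) ^ d * (\<Sum>h\<in>multi_idx n. R h)" by (rule Bd_val)
  also have "\<dots> \<le> ((a+1)\<^sup>2/a) ^ d * L"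
  proof -
    have S0: "(\<Sum>h\<in>multi_idx n. R h) \<ge> 0" by (simp add: sum_nonneg R0)
    have "(\<Sum>h\<in>multi_idx n. R h) \<le> (a + 1) ^ d * L / c ^ d"
      using sumR c0 by (simp add: le_divide_eq mult.commute)
    then have "(1 / (real n + 1)) ^ d * (\<Sum>h\<in>multi_idx n. R h) \<le> (1 / (real n + 1)) ^ d * ((a + 1) ^ d * L / c ^ d)"
      by (intro mult_left_mono) auto
    also have "\<dots> = ((a + 1) / ((real n + 1) * c)) ^ d * L"
      by (simp add: power_divide power_mult_distrib)
    also have "\<dots> \<le> ((a+1)\<^sup>2/a) ^ d * L"
      using const_bound_arith[OF a, of n] L0 c0 a unfolding c_def
      by (intro mult_right_mono power_mono) auto
    finally show ?thesis .
  qed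
  finally show ?thesis using int_T Cint by (simp add: L_def d_def)
qed


definition cl :: "real \<Rightarrow> real \<Rightarrow> real" where "cl m t = max (- m) (min m t)"

lemma cl_cont: "continuous_on S (cl m)"
  unfolding cl_def[abs_def] by (intro continuous_intros)

lemma cl_bound: "m \<ge> 0 \<Longrightarrow> \<bar>cl m t\<bar> \<le> m"
  by (auto simp: cl_def)

lemma cl_diff: "m \<ge> 0 \<Longrightarrow> \<bar>t - cl m t\<bar> \<le> \<bar>t\<bar>"
  by (auto simp: cl_def)

lemma cl_id: "\<bar>t\<bar> \<le> m \<Longrightarrow> cl m t = t"
  by (auto simp: cl_def)

lemma cl_tendsto: "(X \<longlongrightarrow> t) F \<Longrightarrow> ((\<lambda>n. cl m (X n)) \<longlongrightarrow> cl m t) F"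
  unfolding cl_def by (intro tendsto_intros)

lemma dense_cont:
  fixes f :: "real^'d::finite \<Rightarrow> real" and p :: real
  assumes p: "p \<ge> 1" and fm: "f \<in> borel_measurable (lebesgue_on cube)"
    and fi: "integrable (lebesgue_on cube) (\<lambda>x. \<bar>f x\<bar> powr p)" and e: "\<epsilon> > 0"
  shows "\<exists>g. continuous_on UNIV g \<and> integrable (lebesgue_on cube) (\<lambda>x. \<bar>f x - g x\<bar> powr p)
             \<and> (LINT x|lebesgue_on cube. \<bar>f x - g x\<bar> powr p) < \<epsilon>"
proof -
  note fm[measurable]
  have "(\<lambda>m::nat. LINT x|lebesgue_on cube. \<bar>f x - cl (real m) (f x)\<bar> powr p) \<longlonglongrightarrow> (LINT x|lebesgue_on (cube::(real^'d) set). (0::real))"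
  proof (rule Bochner_Integration.integral_dominated_convergence[where w="\<lambda>x. \<bar>f x\<bar> powr p"])
    show "(\<lambda>x. 0::real) \<in> borel_measurable (lebesgue_on cube)" by simp
    show "(\<lambda>x. \<bar>f x - cl (real m) (f x)\<bar> powr p) \<in> borel_measurable (lebesgue_on cube)" for m
      unfolding cl_def by measurable
    show "integrable (lebesgue_on cube) (\<lambda>x. \<bar>f x\<bar> powr p)" by (rule fi)
    show "AE x in lebesgue_on cube. (\<lambda>m. \<bar>f x - cl (real m) (f x)\<bar> powr p) \<longlonglongrightarrow> 0"
    proof (rule AE_I2)
      fix x
      obtain M :: nat where M: "\<bar>f x\<bar> \<le> real M" using real_arch_simple by blast
      have "eventually (\<lambda>m. \<bar>f x - cl (real m) (f x)\<bar> powr p = 0) sequentially"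
        unfolding eventually_sequentially
        by (rule exI[of _ M]) (use M in \<open>auto simp: cl_id\<close>)
      then show "(\<lambda>m. \<bar>f x - cl (real m) (f x)\<bar> powr p) \<longlonglongrightarrow> 0"
        by (rule tendsto_eventually)
    qed
    show "AE x in lebesgue_on cube. norm (\<bar>f x - cl (real m) (f x)\<bar> powr p) \<le> \<bar>f x\<bar> powr p" for m
      by (rule AE_I2) (use p cl_diff in \<open>auto intro!: powr_mono2\<close>)
  qed
  then have "(\<lambda>m::nat. LINT x|lebesgue_on cube. \<bar>f x - cl (real m) (f x)\<bar> powr p) \<longlonglongrightarrow> 0" by simp
  from order_tendstoD(2)[OF this e] obtain m :: nat
    where m: "(LINT x|lebesgue_on cube. \<bar>f x - cl (real m) (f x)\<bar> powr p) < \<epsilon>"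
    by (auto simp: eventually_sequentially)
  have "f measurable_on cube" using fm by (simp add: measurable_on_iff_borel_measurable)
  then obtain N g where N: "negligible N" and gc: "\<And>j. continuous_on UNIV (g j)"
    and gl: "\<And>x. x \<notin> N \<Longrightarrow> (\<lambda>j. g j x) \<longlonglongrightarrow> (if x \<in> cube then f x else 0)"
    unfolding measurable_on_def by blast
  define k where "k j x = cl (real m) (g j x)" for j x
  have kc: "continuous_on UNIV (k j)" for j
    unfolding k_def[abs_def] by (rule continuous_on_compose2[OF cl_cont gc]) auto
  have km [measurable]: "k j \<in> borel_measurable (lebesgue_on cube)" for j
    by (rule meas_M_cont[OF kc])
  define w where "w x = 2 powr (p - 1) * (\<bar>f x\<bar> powr p + real m powr p)" for x
  have wi: "integrable (lebesgue_on cube) w"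
  proof -
    have ci: "integrable (lebesgue_on (cube::(real^'d) set)) (\<lambda>_. real m powr p)"
      by (rule integrable_cont_cube) simp
    show ?thesis unfolding w_def using fi ci by simp
  qed
  have lim: "(\<lambda>j. LINT x|lebesgue_on cube. \<bar>f x - k j x\<bar> powr p) \<longlonglongrightarrow> (LINT x|lebesgue_on cube. \<bar>f x - cl (real m) (f x)\<bar> powr p)"
  proof (rule Bochner_Integration.integral_dominated_convergence[where w=w])
    show "(\<lambda>x. \<bar>f x - cl (real m) (f x)\<bar> powr p) \<in> borel_measurable (lebesgue_on cube)"
      unfolding cl_def by measurable
    show "(\<lambda>x. \<bar>f x - k j x\<bar> powr p) \<in> borel_measurable (lebesgue_on cube)" for j
      by measurable
    show "integrable (lebesgue_on cube) w" by (rule wi)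
    have "AE x in lebesgue. x \<notin> N" using N by (simp add: AE_not_in negligible_iff_null_sets)
    then have "AE x in lebesgue_on cube. x \<notin> N" by (simp add: AE_restrict_space_iff) (erule AE_mp, simp)
    then show "AE x in lebesgue_on cube. (\<lambda>j. \<bar>f x - k j x\<bar> powr p) \<longlonglongrightarrow> \<bar>f x - cl (real m) (f x)\<bar> powr p"
    proof (rule AE_mp)
      have "\<forall>x\<in>space (lebesgue_on cube). x \<notin> N \<longrightarrow> (\<lambda>j. \<bar>f x - k j x\<bar> powr p) \<longlonglongrightarrow> \<bar>f x - cl (real m) (f x)\<bar> powr p"
      proof (intro ballI impI)
        fix x assume x: "x \<in> space (lebesgue_on cube)" and xN: "x \<notin> N"
        then have "(\<lambda>j. g j x) \<longlonglongrightarrow> f x" using gl[OF xN] by simp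
        then have "(\<lambda>j. k j x) \<longlonglongrightarrow> cl (real m) (f x)" unfolding k_def by (rule cl_tendsto)
        then show "(\<lambda>j. \<bar>f x - k j x\<bar> powr p) \<longlonglongrightarrow> \<bar>f x - cl (real m) (f x)\<bar> powr p"
          using p by (intro tendsto_intros) auto
      qed
      then show "AE x in lebesgue_on cube. x \<notin> N \<longrightarrow> (\<lambda>j. \<bar>f x - k j x\<bar> powr p) \<longlonglongrightarrow> \<bar>f x - cl (real m) (f x)\<bar> powr p"
        by (intro AE_I2) blast
    qed
    show "AE x in lebesgue_on cube. norm (\<bar>f x - k j x\<bar> powr p) \<le> w x" for j
    proof (rule AE_I2)
      fix x
      have "\<bar>f x - k j x\<bar> \<le> \<bar>f x\<bar> + \<bar>real m\<bar>"
        using cl_bound[of "real m" "g j x"] by (simp add: k_def)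
      then have "\<bar>f x - k j x\<bar> powr p \<le> \<bar>\<bar>f x\<bar> + \<bar>real m\<bar>\<bar> powr p"
        using p by (intro powr_mono2) auto
      also have "\<dots> \<le> w x" unfolding w_def using powr_add2[OF p, of "\<bar>f x\<bar>" "\<bar>real m\<bar>"] by simp
      finally show "norm (\<bar>f x - k j x\<bar> powr p) \<le> w x" by simp
    qed
  qed
  from order_tendstoD(2)[OF lim m] obtain j where j: "(LINT x|lebesgue_on cube. \<bar>f x - k j x\<bar> powr p) < \<epsilon>"
    by (auto simp: eventually_sequentially)
  have ji: "integrable (lebesgue_on cube) (\<lambda>x. \<bar>f x - k j x\<bar> powr p)"
  proof (rule Bochner_Integration.integrable_bound[OF wi])
    show "(\<lambda>x. \<bar>f x - k j x\<bar> powr p) \<in> borel_measurable (lebesgue_on cube)" by measurable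
    show "AE x in lebesgue_on cube. norm (\<bar>f x - k j x\<bar> powr p) \<le> norm (w x)"
    proof (rule AE_I2)
      fix x
      have "\<bar>f x - k j x\<bar> \<le> \<bar>f x\<bar> + \<bar>real m\<bar>"
        using cl_bound[of "real m" "g j x"] by (simp add: k_def)
      then have "\<bar>f x - k j x\<bar> powr p \<le> \<bar>\<bar>f x\<bar> + \<bar>real m\<bar>\<bar> powr p"
        using p by (intro powr_mono2) auto
      also have "\<dots> \<le> w x" unfolding w_def using powr_add2[OF p, of "\<bar>f x\<bar>" "\<bar>real m\<bar>"] by simp
      also have "\<dots> \<le> norm (w x)" by simp
      finally show "norm (\<bar>f x - k j x\<bar> powr p) \<le> norm (w x)" by simp
    qed
  qed
  show ?thesis using kc ji j by blast
qed


theorem theorem4p1: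
  fixes f :: "real ^ 'd::finite \<Rightarrow> real" and a p :: real
  assumes "a > 0" and "1 \<le> p"
    and "f \<in> borel_measurable (lebesgue_on cube)"
    and "integrable (lebesgue_on cube) (\<lambda>x. \<bar>f x\<bar> powr p)"
  shows "(\<lambda>n. LINT x|lebesgue_on cube. \<bar>Cop a n f x - f x\<bar> powr p) \<longlonglongrightarrow> 0"
proof (rule LIMSEQ_I)
  note a = assms(1) and p = assms(2) and fm = assms(3) and fi = assms(4)
  note fm[measurable]
  fix \<epsilon> :: real assume e: "\<epsilon> > 0"
  define A where "A = 3 powr (p - 1)"
  have A0: "A > 0" by (simp add: A_def)
  define K0 where "K0 = ((a+1)\<^sup>2/a) ^ CARD('d)"
  have K00: "K0 \<ge> 0" using a by (simp add: K0_def)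
  define e' where "e' = \<epsilon> / (3 * A)"
  have e'0: "e' > 0" using e A0 by (simp add: e'_def)
  obtain g where gc: "continuous_on UNIV g"
    and gi: "integrable (lebesgue_on cube) (\<lambda>x. \<bar>f x - g x\<bar> powr p)"
    and gl: "(LINT x|lebesgue_on cube. \<bar>f x - g x\<bar> powr p) < e' / (K0 + 1)"
    using dense_cont[OF p fm fi, of "e' / (K0 + 1)"] e'0 K00 by auto
  have gm [measurable]: "g \<in> borel_measurable (lebesgue_on cube)" by (rule meas_M_cont[OF gc])
  define \<delta> where "\<delta> = (e' / 2) powr (1 / p)"
  have \<delta>0: "\<delta> > 0" using e'0 by (simp add: \<delta>_def)
  have \<delta>p: "\<delta> powr p = e' / 2" using e'0 p by (simp add: \<delta>_def powr_powr)
  obtain N where N: "\<And>n x. N \<le> n \<Longrightarrow> x \<in> cube \<Longrightarrow> \<bar>Cop a n g x - g x\<bar> \<le> \<delta>"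
    using Cop_unif[OF a continuous_on_subset[OF gc] \<delta>0] by auto
  show "\<exists>no. \<forall>n\<ge>no. norm ((LINT x|lebesgue_on cube. \<bar>Cop a n f x - f x\<bar> powr p) - 0) < \<epsilon>"
  proof (intro exI allI impI)
    fix n :: nat assume n: "N \<le> n"
    define \<phi> where "\<phi> x = f x - g x" for x
    have \<phi>m: "\<phi> \<in> borel_measurable (lebesgue_on cube)" unfolding \<phi>_def[abs_def] by measurable
    have \<phi>i: "integrable (lebesgue_on cube) (\<lambda>x. \<bar>\<phi> x\<bar> powr p)" using gi by (simp add: \<phi>_def)
    note B\<phi> = Cop_bound[OF a p \<phi>m \<phi>i, of n]
    note Bf = Cop_bound[OF a p fm fi, of n]
    have lin: "Cop a n \<phi> x = Cop a n f x - Cop a n g x" for x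
    proof -
      have "Cop a n \<phi> x = (\<Sum>h\<in>multi_idx n. bern n h x * (LINT u|lebesgue_on cube. f (Tm a n h u))
          - bern n h x * (LINT u|lebesgue_on cube. g (Tm a n h u)))"
        unfolding Cop_Tm
      proof (intro sum.cong refl)
        fix h :: "'d \<Rightarrow> nat" assume h: "h \<in> multi_idx n"
        have "(LINT u|lebesgue_on cube. \<phi> (Tm a n h u)) = (LINT u|lebesgue_on cube. f (Tm a n h u)) - (LINT u|lebesgue_on cube. g (Tm a n h u))"
          unfolding \<phi>_def
          by (rule Bochner_Integration.integral_diff) (use Bf h integrable_cont_Tm[OF a continuous_on_subset[OF gc] h] in auto)
        then show "bern n h x * (LINT u|lebesgue_on cube. \<phi> (Tm a n h u)) = bern n h x * (LINT u|lebesgue_on cube. f (Tm a n h u))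
          - bern n h x * (LINT u|lebesgue_on cube. g (Tm a n h u))"
          by (simp add: right_diff_distrib)
      qed
      then show ?thesis by (simp add: sum_subtractf Cop_Tm)
    qed
    define U where "U x = \<bar>Cop a n g x - g x\<bar> powr p" for x
    have Cfm [measurable]: "Cop a n f \<in> borel_measurable (lebesgue_on cube)" by (rule meas_M_cont[OF cont_Cop])
    have Cgm [measurable]: "Cop a n g \<in> borel_measurable (lebesgue_on cube)" by (rule meas_M_cont[OF cont_Cop])
    have C\<phi>m [measurable]: "Cop a n \<phi> \<in> borel_measurable (lebesgue_on cube)" by (rule meas_M_cont[OF cont_Cop])
    have Um [measurable]: "U \<in> borel_measurable (lebesgue_on cube)" unfolding U_def[abs_def] by measurable
    have Ule: "U x \<le> \<delta> powr p" if x: "x \<in> cube" for x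
      unfolding U_def using N[OF n x] p by (intro powr_mono2) auto
    have ci: "integrable (lebesgue_on (cube::(real^'d) set)) (\<lambda>_. \<delta> powr p)"
      by (rule integrable_cont_cube) simp
    have Ui: "integrable (lebesgue_on cube) U"
      by (rule Bochner_Integration.integrable_bound[OF ci Um]) (rule AE_I2, use Ule in \<open>auto simp: U_def\<close>)
    have UI: "(LINT x|lebesgue_on cube. U x) \<le> \<delta> powr p"
    proof -
      have "(LINT x|lebesgue_on cube. U x) \<le> (LINT x|lebesgue_on (cube::(real^'d) set). \<delta> powr p)"
        by (rule integral_mono[OF Ui ci]) (use Ule in auto)
      then show ?thesis by simp
    qed
    define RHS where "RHS x = A * (\<bar>Cop a n \<phi> x\<bar> powr p + U x + \<bar>f x - g x\<bar> powr p)" for x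
    have RHSi: "integrable (lebesgue_on cube) RHS"
      unfolding RHS_def[abs_def] using B\<phi> Ui gi by simp
    have pw: "\<bar>Cop a n f x - f x\<bar> powr p \<le> RHS x" for x
    proof -
      have eq: "Cop a n f x - f x = Cop a n \<phi> x + (Cop a n g x - g x) + (g x - f x)"
        using lin[of x] by simp
      have "\<bar>Cop a n f x - f x\<bar> powr p = \<bar>Cop a n \<phi> x + (Cop a n g x - g x) + (g x - f x)\<bar> powr p"
        by (simp only: eq)
      also have "\<dots> \<le> A * (\<bar>Cop a n \<phi> x\<bar> powr p + \<bar>Cop a n g x - g x\<bar> powr p + \<bar>g x - f x\<bar> powr p)"
        unfolding A_def by (rule powr_add3[OF p])
      also have "\<bar>g x - f x\<bar> = \<bar>f x - g x\<bar>" by simp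
      finally show ?thesis by (simp add: RHS_def U_def)
    qed
    have LHSm: "(\<lambda>x. \<bar>Cop a n f x - f x\<bar> powr p) \<in> borel_measurable (lebesgue_on cube)" by measurable
    have LHSi: "integrable (lebesgue_on cube) (\<lambda>x. \<bar>Cop a n f x - f x\<bar> powr p)"
      by (rule Bochner_Integration.integrable_bound[OF RHSi LHSm]) (rule AE_I2, use pw in \<open>force intro: order_trans[OF _ abs_ge_self]\<close>)
    define G where "G = (LINT x|lebesgue_on cube. \<bar>f x - g x\<bar> powr p)"
    have G0: "G \<ge> 0" by (simp add: G_def)
    have "(LINT x|lebesgue_on cube. \<bar>Cop a n f x - f x\<bar> powr p) \<le> (LINT x|lebesgue_on cube. RHS x)"
      by (rule integral_mono[OF LHSi RHSi]) (use pw in auto)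
    also have "\<dots> = A * ((LINT x|lebesgue_on cube. \<bar>Cop a n \<phi> x\<bar> powr p) + (LINT x|lebesgue_on cube. U x) + G)"
      unfolding RHS_def G_def using B\<phi> Ui gi by simp
    also have "\<dots> \<le> A * (K0 * G + \<delta> powr p + G)"
    proof -
      have "(LINT x|lebesgue_on cube. \<bar>Cop a n \<phi> x\<bar> powr p) \<le> K0 * G"
      proof -
        have "(LINT x|lebesgue_on cube. \<bar>\<phi> x\<bar> powr p) = G" by (simp add: G_def \<phi>_def)
        then show ?thesis using B\<phi> by (simp add: K0_def)
      qed
      then show ?thesis using UI A0 by (intro mult_left_mono) auto
    qed
    also have "\<dots> < \<epsilon>"
    proof -
      have "(K0 + 1) * G < e'" using gl K00 by (simp add: G_def field_simps)
      then have "K0 * G + \<delta> powr p + G < e' + e' / 2" using \<delta>p by (simp add: algebra_simps)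
      then have "A * (K0 * G + \<delta> powr p + G) < A * (e' + e' / 2)" using A0 by simp
      also have "A * (e' + e' / 2) = \<epsilon> / 2" using A0 by (simp add: e'_def field_simps)
      finally show ?thesis using e by simp
    qed
    finally have lt: "(LINT x|lebesgue_on cube. \<bar>Cop a n f x - f x\<bar> powr p) < \<epsilon>" .
    have "0 \<le> (LINT x|lebesgue_on cube. \<bar>Cop a n f x - f x\<bar> powr p)" by simp
    then show "norm ((LINT x|lebesgue_on cube. \<bar>Cop a n f x - f x\<bar> powr p) - 0) < \<epsilon>" using lt by simp
  qed
qed


end
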